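(* Let $n\ge 1$ and let $\mathbf F_n\in\mathbb C^{n\times n}$ be the unitary discrete Fourier transform matrix, $[\mathbf F_n]_{j,k}=n^{-1/2}e^{-2\pi i jk/n}$ for $j,k=0,\dots,n-1$. Let $\boldsymbol\Sigma\in\mathbb C^{n\times n}$ be Hermitian positive semidefinite and let $\mathbf g\sim\mathcal{CN}(\mathbf 0,\boldsymbol\Sigma)$, i.e. $\mathbf g=\boldsymbol\Sigma^{1/2}(\mathbf x+i\mathbf y)$ with $\mathbf x,\mathbf y\sim\mathcal N(\mathbf 0,\mathbf I_n)$ independent real standard Gaussian vectors. Then for every $\alpha>0$, \[ \Pr\big(\|\mathbf F_n\mathbf g\|_\infty\le\alpha\,\|\boldsymbol\Sigma^{1/2}\|_2\big)\ \ge\ \frac{\gamma(n,\alpha^2/2)}{\Gamma(n)}. \]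
   Context: $\|\cdot\|_\infty$ is the maximum modulus of the entries of a vector, $\|\cdot\|_2$ on matrices is the spectral norm, $\boldsymbol\Sigma^{1/2}$ is the Hermitian positive semidefinite square root, $\Gamma$ is the Gamma function and $\gamma(s,x)=\int_0^x t^{s-1}e^{-t}\,dt$ is the lower incomplete Gamma function. The convention for complex normal vectors (real and imaginary parts of the underlying standard vector each standard real Gaussian) is the one under which $\|\mathbf x+i\mathbf y\|_2$ follows a $\chi$-distribution with $2n$ degrees of freedom. *)

theory Defs
  imports "HOL-Probability.Probability"
begin

text \<open>Vectors in C^n are functions nat => complex (only indices < n matter);
  n x n matrices are functions nat => nat => complex.\<close>

definition mat_vec :: "nat \<Rightarrow> (nat \<Rightarrow> nat \<Rightarrow> complex) \<Rightarrow> (nat \<Rightarrow> complex) \<Rightarrow> (nat \<Rightarrow> complex)" where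
  "mat_vec n A v = (\<lambda>i. \<Sum>j<n. A i j * v j)"

definition vec_norm2 :: "nat \<Rightarrow> (nat \<Rightarrow> complex) \<Rightarrow> real" where
  "vec_norm2 n v = sqrt (\<Sum>i<n. (cmod (v i))\<^sup>2)"

definition vec_norm_inf :: "nat \<Rightarrow> (nat \<Rightarrow> complex) \<Rightarrow> real" where
  "vec_norm_inf n v = Max ((\<lambda>i. cmod (v i)) ` {..<n})"

definition spec_norm :: "nat \<Rightarrow> (nat \<Rightarrow> nat \<Rightarrow> complex) \<Rightarrow> real" where
  "spec_norm n A = Sup {vec_norm2 n (mat_vec n A v) | v. vec_norm2 n v \<le> 1}"

definition hermitian_mat :: "nat \<Rightarrow> (nat \<Rightarrow> nat \<Rightarrow> complex) \<Rightarrow> bool" where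
  "hermitian_mat n A \<longleftrightarrow> (\<forall>i<n. \<forall>j<n. A i j = cnj (A j i))"

definition psd_mat :: "nat \<Rightarrow> (nat \<Rightarrow> nat \<Rightarrow> complex) \<Rightarrow> bool" where
  "psd_mat n A \<longleftrightarrow> hermitian_mat n A \<and>
     (\<forall>v. 0 \<le> Re (\<Sum>i<n. cnj (v i) * mat_vec n A v i))"

definition mat_mult :: "nat \<Rightarrow> (nat \<Rightarrow> nat \<Rightarrow> complex) \<Rightarrow> (nat \<Rightarrow> nat \<Rightarrow> complex) \<Rightarrow> (nat \<Rightarrow> nat \<Rightarrow> complex)" where
  "mat_mult n A B = (\<lambda>i k. \<Sum>j<n. A i j * B j k)"

definition dft_mat :: "nat \<Rightarrow> nat \<Rightarrow> nat \<Rightarrow> complex" where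
  "dft_mat n j k = exp (- 2 * of_real pi * \<i> * of_nat j * of_nat k / of_nat n) / of_real (sqrt (real n))"

definition lower_inc_Gamma :: "real \<Rightarrow> real \<Rightarrow> real" where
  "lower_inc_Gamma s x = integral {0..x} (\<lambda>t. t powr (s - 1) * exp (- t))"

definition std_gauss :: "real measure" where
  "std_gauss = density lborel std_normal_density"

definition gauss_pair :: "nat \<Rightarrow> ((nat \<Rightarrow> real) \<times> (nat \<Rightarrow> real)) measure" where
  "gauss_pair n = (PiM {..<n} (\<lambda>_. std_gauss)) \<Otimes>\<^sub>M (PiM {..<n} (\<lambda>_. std_gauss))"

end

theory Submission
  imports Defs "HOL-Analysis.L2_Norm"
begin

lemma nn_even:
  fixes g :: "real \<Rightarrow> ennreal"
  assumes [measurable]: "g \<in> borel_measurable borel" and ev: "\<And>x. g (-x) = g x"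
  shows "(\<integral>\<^sup>+x. g x \<partial>lborel) = 2 * (\<integral>\<^sup>+x. g x * indicator {0..} x \<partial>lborel)"
proof -
  have "(\<integral>\<^sup>+x. g x \<partial>lborel) = (\<integral>\<^sup>+x. g x * indicator {0..} x + g x * indicator {..<0} x \<partial>lborel)"
    by (intro nn_integral_cong) (auto split: split_indicator)
  also have "\<dots> = (\<integral>\<^sup>+x. g x * indicator {0..} x \<partial>lborel) + (\<integral>\<^sup>+x. g x * indicator {..<0} x \<partial>lborel)"
    by (intro nn_integral_add) auto
  also have "(\<integral>\<^sup>+x. g x * indicator {..<0} x \<partial>lborel) = (\<integral>\<^sup>+x. g x * indicator {..<0} x \<partial>distr lborel borel uminus)"
    by (simp add: lborel_distr_uminus)
  also have "\<dots> = (\<integral>\<^sup>+x. g (-x) * indicator {..<0} (-x) \<partial>lborel)"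
    by (subst nn_integral_distr) auto
  also have "\<dots> = (\<integral>\<^sup>+x. g x * indicator {0..} x \<partial>lborel)"
    by (intro nn_integral_cong_AE, rule eventually_mono[OF AE_lborel_singleton[of 0]]) (auto simp: ev split: split_indicator)
  finally show ?thesis by (simp add: mult_2)
qed

lemma nn_C2:
  fixes c a :: real assumes c: "0 < c" and a: "0 \<le> a"
  shows "(\<integral>\<^sup>+x. ennreal (x * exp (-(c*x\<^sup>2)/2)) * indicator {0..sqrt(a/c)} x \<partial>lborel) = ennreal ((1 - exp(-a/2))/c)"
proof -
  have "(\<integral>\<^sup>+x. ennreal (x * exp (-(c*x\<^sup>2)/2)) * indicator {0..sqrt(a/c)} x \<partial>lborel)
      = (\<lambda>x. - exp (-(c*x\<^sup>2)/2) / c) (sqrt(a/c)) - (\<lambda>x. - exp (-(c*x\<^sup>2)/2) / c) 0"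
    using c a by (intro nn_integral_FTC_Icc) (auto intro!: derivative_eq_intros simp: field_simps)
  also have "(sqrt(a/c))\<^sup>2 = a/c" using a c by simp
  then have "(\<lambda>x. - exp (-(c*x\<^sup>2)/2) / c) (sqrt(a/c)) - (\<lambda>x. - exp (-(c*x\<^sup>2)/2) / c) 0 = (1 - exp(-a/2))/c"
    using c by (simp add: field_simps)
  finally show ?thesis by simp
qed

lemma nn_C3: "(\<integral>\<^sup>+s. ennreal (1/(1+s\<^sup>2)) \<partial>lborel) = ennreal pi"
proof -
  have "(\<integral>\<^sup>+s. ennreal (1/(1+s\<^sup>2)) \<partial>lborel) = 2 * (\<integral>\<^sup>+s. ennreal (1/(1+s\<^sup>2)) * indicator {0..} s \<partial>lborel)"
    by (rule nn_even) auto
  also have "(\<integral>\<^sup>+s. ennreal (1/(1+s\<^sup>2)) * indicator {0..} s \<partial>lborel) = ennreal (pi/2 - arctan 0)"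
    by (rule nn_integral_FTC_atLeast)
       (auto intro!: derivative_eq_intros tendsto_arctan_at_top simp: add_nonneg_eq_0_iff field_simps power2_eq_square)
  also have "2 * ennreal (pi/2 - arctan 0) = ennreal (2*(pi/2))" by (subst ennreal_mult) auto
  finally show ?thesis by simp
qed

lemma sqrt_le_iff_aux: "0 \<le> x \<Longrightarrow> 0 < c \<Longrightarrow> 0 \<le> a \<Longrightarrow> (x\<^sup>2 * c \<le> a) = (x \<le> sqrt (a/c))"
proof -
  assume h: "0 \<le> x" "0 < c" "0 \<le> a"
  have "x \<le> sqrt (a/c) \<longleftrightarrow> x\<^sup>2 \<le> a/c" using h by (metis real_sqrt_abs real_sqrt_le_iff abs_of_nonneg)
  also have "\<dots> \<longleftrightarrow> x\<^sup>2 * c \<le> a" using h by (simp add: pos_le_divide_eq)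
  finally show ?thesis by simp
qed

lemma inner_x:
  fixes s a :: real assumes a: "0 \<le> a"
  shows "(\<integral>\<^sup>+x. ennreal (if x\<^sup>2 * (1+s\<^sup>2) \<le> a then \<bar>x\<bar> * exp (-((1+s\<^sup>2)*x\<^sup>2)/2) else 0) \<partial>lborel)
     = ennreal (2 * ((1 - exp(-a/2))/(1+s\<^sup>2)))"
proof -
  define c where "c = 1 + s\<^sup>2"
  have c: "0 < c" unfolding c_def by (simp add: add_pos_nonneg)
  have "(\<integral>\<^sup>+x. ennreal (if x\<^sup>2 * c \<le> a then \<bar>x\<bar> * exp (-(c*x\<^sup>2)/2) else 0) \<partial>lborel)
      = 2 * (\<integral>\<^sup>+x. ennreal (if x\<^sup>2 * c \<le> a then \<bar>x\<bar> * exp (-(c*x\<^sup>2)/2) else 0) * indicator {0..} x \<partial>lborel)"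
    by (rule nn_even) auto
  also have "(\<integral>\<^sup>+x. ennreal (if x\<^sup>2 * c \<le> a then \<bar>x\<bar> * exp (-(c*x\<^sup>2)/2) else 0) * indicator {0..} x \<partial>lborel)
      = (\<integral>\<^sup>+x. ennreal (x * exp (-(c*x\<^sup>2)/2)) * indicator {0..sqrt(a/c)} x \<partial>lborel)"
    by (intro nn_integral_cong) (auto simp: sqrt_le_iff_aux[OF _ c a] split: split_indicator)
  also have "\<dots> = ennreal ((1 - exp(-a/2))/c)" by (rule nn_C2[OF c a])
  also have "2 * ennreal ((1 - exp(-a/2))/c) = ennreal (2 * ((1 - exp(-a/2))/c))"
    using c a by (subst ennreal_mult) (auto intro!: divide_nonneg_pos)
  finally show ?thesis unfolding c_def .
qed

lemma gauss2_lborel: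
  fixes a :: real assumes a: "0 \<le> a"
  shows "(\<integral>\<^sup>+x. \<integral>\<^sup>+y. ennreal (if x\<^sup>2 + y\<^sup>2 \<le> a then exp (-(x\<^sup>2+y\<^sup>2)/2) else 0) \<partial>lborel \<partial>lborel)
     = ennreal (2 * pi * (1 - exp(-a/2)))"
proof -
  let ?k = "\<lambda>x y::real. ennreal (if x\<^sup>2 + y\<^sup>2 \<le> a then exp (-(x\<^sup>2+y\<^sup>2)/2) else 0)"
  have "(\<integral>\<^sup>+x. \<integral>\<^sup>+y. ?k x y \<partial>lborel \<partial>lborel) = (\<integral>\<^sup>+x. \<integral>\<^sup>+s. ennreal \<bar>x\<bar> * ?k x (\<bar>x\<bar> * s) \<partial>lborel \<partial>lborel)"
  proof (intro nn_integral_cong_AE, rule eventually_mono[OF AE_lborel_singleton[of 0]])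
    fix x :: real assume "x \<noteq> 0"
    then have "(\<integral>\<^sup>+y. ?k x y \<partial>lborel) = ennreal \<bar>\<bar>x\<bar>\<bar> * (\<integral>\<^sup>+s. ?k x (0 + \<bar>x\<bar> * s) \<partial>lborel)"
      by (intro nn_integral_real_affine) auto
    also have "\<dots> = (\<integral>\<^sup>+s. ennreal \<bar>x\<bar> * ?k x (\<bar>x\<bar> * s) \<partial>lborel)"
      by (simp only: add_0_left, subst nn_integral_cmult) auto
    finally show "(\<integral>\<^sup>+y. ?k x y \<partial>lborel) = (\<integral>\<^sup>+s. ennreal \<bar>x\<bar> * ?k x (\<bar>x\<bar> * s) \<partial>lborel)" by simp
  qed
  also have "\<dots> = (\<integral>\<^sup>+s. \<integral>\<^sup>+x. ennreal \<bar>x\<bar> * ?k x (\<bar>x\<bar> * s) \<partial>lborel \<partial>lborel)"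
    by (rule lborel_pair.Fubini'[symmetric]) measurable
  also have "\<dots> = (\<integral>\<^sup>+s. ennreal (2 * ((1 - exp(-a/2))/(1+s\<^sup>2))) \<partial>lborel)"
  proof (intro nn_integral_cong)
    fix s :: real
    have "(\<integral>\<^sup>+x. ennreal \<bar>x\<bar> * ?k x (\<bar>x\<bar> * s) \<partial>lborel)
      = (\<integral>\<^sup>+x. ennreal (if x\<^sup>2 * (1+s\<^sup>2) \<le> a then \<bar>x\<bar> * exp (-((1+s\<^sup>2)*x\<^sup>2)/2) else 0) \<partial>lborel)"
      by (intro nn_integral_cong) (auto simp: ennreal_mult'[symmetric] power_mult_distrib algebra_simps)
    also have "\<dots> = ennreal (2 * ((1 - exp(-a/2))/(1+s\<^sup>2)))" by (rule inner_x[OF a])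
    finally show "(\<integral>\<^sup>+x. ennreal \<bar>x\<bar> * ?k x (\<bar>x\<bar> * s) \<partial>lborel) = ennreal (2 * ((1 - exp(-a/2))/(1+s\<^sup>2)))" .
  qed
  also have "\<dots> = (\<integral>\<^sup>+s. ennreal (2 * (1 - exp(-a/2))) * ennreal (1/(1+s\<^sup>2)) \<partial>lborel)"
    using a by (intro nn_integral_cong) (auto simp: ennreal_mult'[symmetric] add_pos_nonneg)
  also have "\<dots> = ennreal (2 * (1 - exp(-a/2))) * ennreal pi"
    by (subst nn_integral_cmult) (auto simp: nn_C3)
  also have "\<dots> = ennreal (2 * pi * (1 - exp(-a/2)))"
    using a by (subst ennreal_mult'[symmetric]) (auto simp: algebra_simps)
  finally show ?thesis .
qed

lemma sets_std_gauss [simp, measurable_cong]: "sets std_gauss = sets borel"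
  by (simp add: std_gauss_def)
lemma space_std_gauss [simp]: "space std_gauss = UNIV"
  by (simp add: std_gauss_def)
lemma prob_space_std_gauss: "prob_space std_gauss"
  unfolding std_gauss_def by (rule prob_space_normal_density) simp

lemma gauss2:
  fixes a :: real assumes a: "0 \<le> a"
  shows "emeasure (std_gauss \<Otimes>\<^sub>M std_gauss) {p \<in> space (std_gauss \<Otimes>\<^sub>M std_gauss). (fst p)\<^sup>2 + (snd p)\<^sup>2 \<le> a}
     = ennreal (1 - exp(-a/2))"
proof -
  interpret G: prob_space std_gauss by (rule prob_space_std_gauss)
  let ?S = "{p \<in> space (std_gauss \<Otimes>\<^sub>M std_gauss). (fst p)\<^sup>2 + (snd p)\<^sup>2 \<le> a}"
  let ?k = "\<lambda>x y::real. ennreal (if x\<^sup>2 + y\<^sup>2 \<le> a then exp (-(x\<^sup>2+y\<^sup>2)/2) else 0)"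
  have Sm: "?S \<in> sets (std_gauss \<Otimes>\<^sub>M std_gauss)" by measurable
  have Seq: "?S = {p. (fst p)\<^sup>2 + (snd p)\<^sup>2 \<le> a}" by (simp add: space_pair_measure)
  have inner: "(\<integral>\<^sup>+y. indicator ?S (x,y) \<partial>std_gauss) = (\<integral>\<^sup>+y. ennreal (std_normal_density y) * indicator ?S (x,y) \<partial>lborel)" for x
    unfolding Seq std_gauss_def by (rule nn_integral_density) auto
  have "emeasure (std_gauss \<Otimes>\<^sub>M std_gauss) ?S = (\<integral>\<^sup>+x. \<integral>\<^sup>+y. indicator ?S (x,y) \<partial>std_gauss \<partial>std_gauss)"
    by (rule G.emeasure_pair_measure[OF Sm])
  also have "\<dots> = (\<integral>\<^sup>+x. (\<integral>\<^sup>+y. ennreal (std_normal_density y) * indicator ?S (x,y) \<partial>lborel) \<partial>std_gauss)"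
    by (simp only: inner)
  also have "\<dots> = (\<integral>\<^sup>+x. ennreal (std_normal_density x) * (\<integral>\<^sup>+y. ennreal (std_normal_density y) * indicator ?S (x,y) \<partial>lborel) \<partial>lborel)"
    unfolding Seq std_gauss_def by (rule nn_integral_density) auto
  also have "\<dots> = (\<integral>\<^sup>+x. \<integral>\<^sup>+y. ennreal (1/(2*pi)) * ?k x y \<partial>lborel \<partial>lborel)"
  proof (intro nn_integral_cong)
    fix x :: real
    have "ennreal (std_normal_density x) * (\<integral>\<^sup>+y. ennreal (std_normal_density y) * indicator ?S (x,y) \<partial>lborel)
       = (\<integral>\<^sup>+y. ennreal (std_normal_density x) * (ennreal (std_normal_density y) * indicator ?S (x,y)) \<partial>lborel)"
      by (subst nn_integral_cmult) auto
    also have "\<dots> = (\<integral>\<^sup>+y. ennreal (1/(2*pi)) * ?k x y \<partial>lborel)"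
    proof (intro nn_integral_cong)
      fix y :: real
      have "std_normal_density x * std_normal_density y = 1/(2*pi) * exp (-(x\<^sup>2+y\<^sup>2)/2)"
        by (simp add: std_normal_density_def field_simps exp_add[symmetric] real_sqrt_mult[symmetric])
      then show "ennreal (std_normal_density x) * (ennreal (std_normal_density y) * indicator ?S (x,y)) = ennreal (1/(2*pi)) * ?k x y"
        by (auto simp: ennreal_mult'[symmetric] ennreal_mult[symmetric] space_pair_measure split: split_indicator)
    qed
    finally show "ennreal (std_normal_density x) * (\<integral>\<^sup>+y. ennreal (std_normal_density y) * indicator ?S (x,y) \<partial>lborel)
       = (\<integral>\<^sup>+y. ennreal (1/(2*pi)) * ?k x y \<partial>lborel)" .
  qed
  also have "\<dots> = (\<integral>\<^sup>+x. ennreal (1/(2*pi)) * \<integral>\<^sup>+y. ?k x y \<partial>lborel \<partial>lborel)"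
    by (intro nn_integral_cong nn_integral_cmult) auto
  also have "\<dots> = ennreal (1/(2*pi)) * (\<integral>\<^sup>+x. \<integral>\<^sup>+y. ?k x y \<partial>lborel \<partial>lborel)"
    by (rule nn_integral_cmult) measurable
  also have "\<dots> = ennreal (1/(2*pi)) * ennreal (2 * pi * (1 - exp(-a/2)))"
    by (simp only: gauss2_lborel[OF a])
  also have "\<dots> = ennreal (1 - exp(-a/2))"
    using a by (subst ennreal_mult[symmetric]) auto
  finally show ?thesis .
qed

abbreviation "GG \<equiv> std_gauss \<Otimes>\<^sub>M std_gauss"

lemma prob_space_GG: "prob_space GG"
proof -
  interpret G: prob_space std_gauss by (rule prob_space_std_gauss)
  interpret pair_prob_space std_gauss std_gauss by standard
  show ?thesis by (rule P.prob_space_axioms)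
qed

lemma prod_indicator_ennreal:
  "finite I \<Longrightarrow> (\<Prod>i\<in>I. indicator (A i) (f i) :: ennreal) = indicator {x. \<forall>i\<in>I. f i \<in> A i} x"
  by (induction I rule: finite_induct) (auto simp: indicator_def)

lemma stepA:
  fixes I :: "nat set" assumes I: "finite I"
  shows "distr (PiM I (\<lambda>_. std_gauss) \<Otimes>\<^sub>M PiM I (\<lambda>_. std_gauss)) (PiM I (\<lambda>_. GG))
           (\<lambda>\<omega>. \<lambda>i\<in>I. (fst \<omega> i, snd \<omega> i)) = PiM I (\<lambda>_. GG)"
proof -
  interpret G: prob_space std_gauss by (rule prob_space_std_gauss)
  interpret GGp: prob_space GG by (rule prob_space_GG)
  interpret PGG: product_prob_space "\<lambda>_. GG" I ..
  interpret PG0: product_prob_space "\<lambda>_. std_gauss" I ..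
  interpret PG: finite_product_prob_space "\<lambda>_. std_gauss" I by unfold_locales (rule I)
  have pxp: "prob_space (PiM I (\<lambda>_. std_gauss))" by (rule prob_space_PiM) (rule prob_space_std_gauss)
  interpret PX: pair_prob_space "PiM I (\<lambda>_. std_gauss)" "PiM I (\<lambda>_. std_gauss)" by standard
  let ?X = "PiM I (\<lambda>_. std_gauss) \<Otimes>\<^sub>M PiM I (\<lambda>_. std_gauss)"
  let ?\<Phi> = "\<lambda>\<omega>. \<lambda>i\<in>I. (fst \<omega> i, snd \<omega> i)"
  have \<Phi>m[measurable]: "?\<Phi> \<in> measurable ?X (PiM I (\<lambda>_. GG))"
    by measurable
  show ?thesis
  proof (rule PGG.PiM_eqI[OF I])
    show "sets (distr ?X (PiM I (\<lambda>_. GG)) ?\<Phi>) = sets (PiM I (\<lambda>_. GG))" by simp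
  next
    fix A assume A: "\<And>i. i \<in> I \<Longrightarrow> A i \<in> sets GG"
    have PiEm: "Pi\<^sub>E I A \<in> sets (PiM I (\<lambda>_. GG))" using A by (intro sets_PiM_I_finite I) auto
    have Am[measurable]: "indicator (A i) \<in> borel_measurable GG" if "i \<in> I" for i
      using A[OF that] by simp
    have "emeasure (distr ?X (PiM I (\<lambda>_. GG)) ?\<Phi>) (Pi\<^sub>E I A) = emeasure ?X (?\<Phi> -` Pi\<^sub>E I A \<inter> space ?X)"
      by (rule emeasure_distr[OF \<Phi>m PiEm])
    also have "\<dots> = (\<integral>\<^sup>+\<omega>. indicator (?\<Phi> -` Pi\<^sub>E I A \<inter> space ?X) \<omega> \<partial>?X)"
      by (intro nn_integral_indicator[symmetric] measurable_sets[OF \<Phi>m PiEm])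
    also have "\<dots> = (\<integral>\<^sup>+\<omega>. (\<Prod>i\<in>I. indicator (A i) (fst \<omega> i, snd \<omega> i)) \<partial>?X)"
      using I by (intro nn_integral_cong) (auto simp: prod_indicator_ennreal[OF I] indicator_def PiE_iff)
    also have "\<dots> = (\<integral>\<^sup>+x. \<integral>\<^sup>+y. (\<Prod>i\<in>I. indicator (A i) (x i, y i)) \<partial>PiM I (\<lambda>_. std_gauss) \<partial>PiM I (\<lambda>_. std_gauss))"
      by (rule sigma_finite_measure.nn_integral_fst[OF prob_space_imp_sigma_finite[OF pxp], symmetric, where f="\<lambda>\<omega>. (\<Prod>i\<in>I. indicator (A i) (fst \<omega> i, snd \<omega> i))", simplified]) measurable
    also have "\<dots> = (\<integral>\<^sup>+x. (\<Prod>i\<in>I. \<integral>\<^sup>+t. indicator (A i) (x i, t) \<partial>std_gauss) \<partial>PiM I (\<lambda>_. std_gauss))"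
      by (intro nn_integral_cong PG0.product_nn_integral_prod[OF I]) measurable
    also have "\<dots> = (\<Prod>i\<in>I. \<integral>\<^sup>+s. \<integral>\<^sup>+t. indicator (A i) (s, t) \<partial>std_gauss \<partial>std_gauss)"
      by (rule PG0.product_nn_integral_prod[OF I]) measurable
    also have "\<dots> = (\<Prod>i\<in>I. emeasure GG (A i))"
      using A by (intro prod.cong refl G.emeasure_pair_measure[symmetric]) auto
    finally show "emeasure (distr ?X (PiM I (\<lambda>_. GG)) ?\<Phi>) (Pi\<^sub>E I A) = (\<Prod>i\<in>I. emeasure GG (A i))" .
  qed
qed

lemma chi_bound:
  fixes n :: nat and r :: real assumes n: "n \<ge> 1" and r: "0 \<le> r"
  shows "measure (gauss_pair n) {\<omega> \<in> space (gauss_pair n). (\<Sum>i<n. (fst \<omega> i)\<^sup>2 + (snd \<omega> i)\<^sup>2) \<le> r}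
       = erlang_CDF (n - 1) (1/2) r"
proof -
  define I where "I = {..<n}"
  have I: "finite I" "I \<noteq> {}" using n by (auto simp: I_def lessThan_empty_iff)
  interpret G: prob_space std_gauss by (rule prob_space_std_gauss)
  interpret GGp: prob_space GG by (rule prob_space_GG)
  interpret PGG: product_prob_space "\<lambda>_. GG" I ..
  interpret PG0: product_prob_space "\<lambda>_. std_gauss" I ..
  interpret PG: finite_product_prob_space "\<lambda>_. std_gauss" I by unfold_locales (rule I)
  interpret PGGf: finite_product_prob_space "\<lambda>_. GG" I by unfold_locales (rule I)
  let ?P = "PiM I (\<lambda>_. GG)"
  have ppP: "prob_space ?P" by (rule prob_space_PiM) (rule prob_space_GG)
  let ?X = "PiM I (\<lambda>_. std_gauss) \<Otimes>\<^sub>M PiM I (\<lambda>_. std_gauss)"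
  let ?\<Phi> = "\<lambda>\<omega>. \<lambda>i\<in>I. (fst \<omega> i, snd \<omega> i)"
  define Z where "Z i f = (fst (f i))\<^sup>2 + (snd (f i))\<^sup>2" for i and f :: "nat \<Rightarrow> real \<times> real"
  have \<Phi>m[measurable]: "?\<Phi> \<in> measurable ?X ?P" by measurable
  have Zm[measurable]: "Z i \<in> borel_measurable ?P" if "i \<in> I" for i
    unfolding Z_def using that by measurable
  have indep0: "prob_space.indep_vars ?P (\<lambda>_. GG) (\<lambda>i f. f i) I"
  proof (subst prob_space.indep_vars_iff_distr_eq_PiM'[OF ppP I(2)])
    show "(\<lambda>f. f i) \<in> measurable ?P GG" if "i \<in> I" for i using that by (rule measurable_component_singleton)
    have "distr ?P ?P (\<lambda>f. \<lambda>i\<in>I. f i) = distr ?P ?P (\<lambda>f. f)"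
      by (intro distr_cong) (auto simp: space_PiM PiE_def extensional_restrict)
    also have "\<dots> = ?P" by (rule distr_id)
    also have "\<dots> = PiM I (\<lambda>i. distr ?P GG (\<lambda>f. f i))"
      by (intro PiM_cong refl PGG.PiM_component[symmetric]) simp
    finally show "distr ?P ?P (\<lambda>f. \<lambda>i\<in>I. f i) = PiM I (\<lambda>i. distr ?P GG (\<lambda>f. f i))" .
  qed
  have indep: "prob_space.indep_vars ?P (\<lambda>_. borel) Z I"
    using prob_space.indep_vars_compose2[OF ppP indep0, of "\<lambda>_ p. (fst p)\<^sup>2 + (snd p)\<^sup>2" "\<lambda>_. borel"]
    by (simp add: Z_def[abs_def])
  have GGS: "{p \<in> space GG. (fst p)\<^sup>2 + (snd p)\<^sup>2 \<le> a} \<in> sets GG" for a :: real by measurable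
  have distrZ: "distributed ?P lborel (Z i) (exponential_density (1/2))" if i: "i \<in> I" for i
  proof (rule erlang_distributedI)
    show "Z i \<in> borel_measurable ?P" using i by measurable
    fix a :: real assume a: "0 \<le> a"
    have "emeasure ?P {x \<in> space ?P. Z i x \<le> a} = emeasure (distr ?P GG (\<lambda>f. f i)) {p \<in> space GG. (fst p)\<^sup>2 + (snd p)\<^sup>2 \<le> a}"
      using i GGS by (subst emeasure_distr) (auto simp: Z_def space_PiM PiE_iff space_pair_measure extensional_def intro!: arg_cong2[where f=emeasure])
    also have "\<dots> = emeasure GG {p \<in> space GG. (fst p)\<^sup>2 + (snd p)\<^sup>2 \<le> a}"
      using i by (simp add: PGG.PiM_component)
    also have "\<dots> = ennreal (1 - exp(-a/2))" by (rule gauss2[OF a])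
    also have "\<dots> = ennreal (erlang_CDF 0 (1/2) a)" using a by (simp add: erlang_CDF_def)
    finally show "emeasure ?P {x \<in> space ?P. Z i x \<le> a} = ennreal (erlang_CDF 0 (1/2) a)" .
  qed simp
  have sumd: "distributed ?P lborel (\<lambda>x. \<Sum>i\<in>I. Z i x) (erlang_density (card I - 1) (1/2))"
    by (rule prob_space.exponential_distributed_sum[OF ppP I(1) I(2) _ distrZ indep]) simp
  have "measure ?P {x \<in> space ?P. (\<Sum>i\<in>I. Z i x) \<le> r} = erlang_CDF (card I - 1) (1/2) r"
    by (rule prob_space.erlang_distributed_le[OF ppP sumd]) (use r in auto)
  moreover have "measure ?P {x \<in> space ?P. (\<Sum>i\<in>I. Z i x) \<le> r}
     = measure ?X (?\<Phi> -` {x \<in> space ?P. (\<Sum>i\<in>I. Z i x) \<le> r} \<inter> space ?X)"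
    by (subst stepA[OF I(1), symmetric], rule measure_distr[OF \<Phi>m]) measurable
  moreover have "?\<Phi> -` {x \<in> space ?P. (\<Sum>i\<in>I. Z i x) \<le> r} \<inter> space ?X
     = {\<omega> \<in> space (gauss_pair n). (\<Sum>i<n. (fst \<omega> i)\<^sup>2 + (snd \<omega> i)\<^sup>2) \<le> r}"
    using measurable_space[OF \<Phi>m]
    by (auto simp: gauss_pair_def I_def Z_def)
  moreover have "card I = n" by (simp add: I_def)
  moreover have "?X = gauss_pair n" by (simp add: gauss_pair_def I_def)
  ultimately show ?thesis by simp
qed

lemma gamma_erlang:
  fixes n :: nat and b :: real assumes n: "n \<ge> 1" and b: "0 \<le> b"
  shows "lower_inc_Gamma (real n) b / Gamma (real n) = erlang_CDF (n - 1) 1 b"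
proof -
  define k where "k = n - 1"
  have nk: "n = Suc k" using n by (simp add: k_def)
  let ?f = "\<lambda>t::real. t ^ k * exp (-t)"
  have int: "?f integrable_on {0..b}"
    by (intro integrable_continuous_interval continuous_intros)
  have "ennreal (integral {0..b} ?f) = (\<integral>\<^sup>+x. ennreal (?f x) * indicator {0..b} x \<partial>lborel)"
    by (rule nn_integral_has_integral_lebesgue'[symmetric]) (auto intro: integrable_integral[OF int])
  also have "\<dots> = ennreal ((1 - (\<Sum>m\<le>k. (b^m * exp (-b)) / fact m)) * fact k)"
    using b nn_intergal_power_times_exp_Icc[of b k] by simp
  finally have eq1: "ennreal (integral {0..b} ?f) = ennreal ((1 - (\<Sum>m\<le>k. (b^m * exp (-b)) / fact m)) * fact k)" .
  have nn1: "0 \<le> 1 - (\<Sum>m\<le>k. (b^m * exp (-b)) / fact m)"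
    using erlang_CDF_nonneg[of 1 k b] b by (simp add: erlang_CDF_def)
  have nn2: "0 \<le> integral {0..b} ?f"
    by (intro integral_nonneg int) auto
  have I: "integral {0..b} ?f = (1 - (\<Sum>m\<le>k. (b^m * exp (-b)) / fact m)) * fact k"
    using eq1 nn1 nn2 by (subst (asm) ennreal_inj) auto
  have "lower_inc_Gamma (real n) b = integral {0..b} ?f"
    unfolding lower_inc_Gamma_def
  proof (rule integral_spike[of "{0}"])
    fix t assume "t \<in> {0..b} - {0}"
    then have "0 < t" by auto
    then show "t ^ k * exp (-t) = t powr (real n - 1) * exp (-t)"
      by (simp add: nk powr_realpow)
  qed auto
  moreover have "Gamma (real n) = fact k"
    using Gamma_fact[of k] by (simp add: nk add.commute)
  ultimately show ?thesis using I b by (simp add: erlang_CDF_def k_def)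
qed

lemma cs_sum:
  fixes a b :: "nat \<Rightarrow> complex"
  shows "cmod (\<Sum>j<n. a j * b j) \<le> sqrt (\<Sum>j<n. (cmod (a j))\<^sup>2) * sqrt (\<Sum>j<n. (cmod (b j))\<^sup>2)"
proof -
  have "cmod (\<Sum>j<n. a j * b j) \<le> (\<Sum>j<n. cmod (a j * b j))" by (rule norm_sum)
  also have "\<dots> = (\<Sum>j<n. \<bar>cmod (a j)\<bar> * \<bar>cmod (b j)\<bar>)" by (simp add: norm_mult)
  also have "\<dots> \<le> L2_set (\<lambda>j. cmod (a j)) {..<n} * L2_set (\<lambda>j. cmod (b j)) {..<n}"
    by (rule L2_set_mult_ineq)
  finally show ?thesis by (simp add: L2_set_def)
qed

lemma vec_norm2_nonneg: "0 \<le> vec_norm2 n v" by (simp add: vec_norm2_def sum_nonneg)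

lemma mat_vec_bound:
  "vec_norm2 n (mat_vec n A v) \<le> sqrt (\<Sum>i<n. \<Sum>j<n. (cmod (A i j))\<^sup>2) * vec_norm2 n v"
proof -
  have "(\<Sum>i<n. (cmod (mat_vec n A v i))\<^sup>2) \<le> (\<Sum>i<n. (\<Sum>j<n. (cmod (A i j))\<^sup>2) * (\<Sum>j<n. (cmod (v j))\<^sup>2))"
  proof (rule sum_mono)
    fix i
    have "cmod (mat_vec n A v i) \<le> sqrt (\<Sum>j<n. (cmod (A i j))\<^sup>2) * sqrt (\<Sum>j<n. (cmod (v j))\<^sup>2)"
      unfolding mat_vec_def by (rule cs_sum)
    then have "(cmod (mat_vec n A v i))\<^sup>2 \<le> (sqrt (\<Sum>j<n. (cmod (A i j))\<^sup>2) * sqrt (\<Sum>j<n. (cmod (v j))\<^sup>2))\<^sup>2"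
      by (intro power_mono) auto
    also have "\<dots> = (\<Sum>j<n. (cmod (A i j))\<^sup>2) * (\<Sum>j<n. (cmod (v j))\<^sup>2)"
      by (simp add: power_mult_distrib sum_nonneg)
    finally show "(cmod (mat_vec n A v i))\<^sup>2 \<le> (\<Sum>j<n. (cmod (A i j))\<^sup>2) * (\<Sum>j<n. (cmod (v j))\<^sup>2)" .
  qed
  also have "\<dots> = (\<Sum>i<n. \<Sum>j<n. (cmod (A i j))\<^sup>2) * (\<Sum>j<n. (cmod (v j))\<^sup>2)"
    by (simp add: sum_distrib_right)
  finally have "sqrt (\<Sum>i<n. (cmod (mat_vec n A v i))\<^sup>2) \<le> sqrt ((\<Sum>i<n. \<Sum>j<n. (cmod (A i j))\<^sup>2) * (\<Sum>j<n. (cmod (v j))\<^sup>2))"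
    by (rule real_sqrt_le_mono)
  then show ?thesis by (simp add: vec_norm2_def real_sqrt_mult)
qed

lemma vec_norm2_scale: "vec_norm2 n (\<lambda>j. complex_of_real c * v j) = \<bar>c\<bar> * vec_norm2 n v"
proof -
  have "(\<Sum>j<n. (cmod (complex_of_real c * v j))\<^sup>2) = c\<^sup>2 * (\<Sum>j<n. (cmod (v j))\<^sup>2)"
    by (simp add: norm_mult power_mult_distrib sum_distrib_left)
  then show ?thesis by (simp add: vec_norm2_def real_sqrt_mult)
qed

lemma mat_vec_scale: "mat_vec n A (\<lambda>j. c * v j) = (\<lambda>i. c * mat_vec n A v i)"
  by (simp add: mat_vec_def sum_distrib_left algebra_simps)

lemma spec_bound:
  "vec_norm2 n (mat_vec n A v) \<le> spec_norm n A * vec_norm2 n v" and spec_nonneg: "0 \<le> spec_norm n A"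
proof -
  define C where "C = sqrt (\<Sum>i<n. \<Sum>j<n. (cmod (A i j))\<^sup>2)"
  define T where "T = {vec_norm2 n (mat_vec n A v) | v. vec_norm2 n v \<le> 1}"
  have C0: "0 \<le> C" unfolding C_def by (simp add: sum_nonneg)
  have bdd: "bdd_above T"
    unfolding T_def
  proof (rule bdd_aboveI)
    fix x assume "x \<in> {vec_norm2 n (mat_vec n A v) | v. vec_norm2 n v \<le> 1}"
    then obtain u where x: "x = vec_norm2 n (mat_vec n A u)" and u: "vec_norm2 n u \<le> 1" by auto
    have "x \<le> C * vec_norm2 n u" using mat_vec_bound[of n A u] by (simp add: x C_def)
    also have "\<dots> \<le> C * 1" using C0 u by (intro mult_left_mono) auto
    finally show "x \<le> C" by simp
  qed
  have mem: "vec_norm2 n (mat_vec n A u) \<in> T" if "vec_norm2 n u \<le> 1" for u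
    using that unfolding T_def by blast
  have sp: "spec_norm n A = Sup T" by (simp add: spec_norm_def T_def)
  have up: "vec_norm2 n (mat_vec n A u) \<le> spec_norm n A" if "vec_norm2 n u \<le> 1" for u
    unfolding sp by (rule cSup_upper[OF mem[OF that] bdd])
  have z: "vec_norm2 n (\<lambda>_. 0) = 0" by (simp add: vec_norm2_def)
  show "0 \<le> spec_norm n A"
    using up[of "\<lambda>_. 0"] vec_norm2_nonneg[of n "mat_vec n A (\<lambda>_. 0)"] z by simp
  show "vec_norm2 n (mat_vec n A v) \<le> spec_norm n A * vec_norm2 n v"
  proof (cases "vec_norm2 n v = 0")
    case True
    then have "vec_norm2 n (mat_vec n A v) \<le> 0" using mat_vec_bound[of n A v] by simp
    then show ?thesis using True by simp
  next
    case False
    define r where "r = vec_norm2 n v"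
    have r: "0 < r" using False vec_norm2_nonneg[of n v] by (simp add: r_def)
    have "vec_norm2 n (\<lambda>j. complex_of_real (1/r) * v j) = \<bar>1/r\<bar> * vec_norm2 n v"
      by (rule vec_norm2_scale)
    then have "vec_norm2 n (\<lambda>j. complex_of_real (1/r) * v j) = 1"
      using r by (simp add: r_def)
    then have "vec_norm2 n (mat_vec n A (\<lambda>j. complex_of_real (1/r) * v j)) \<le> spec_norm n A"
      by (intro up) simp
    moreover have "vec_norm2 n (mat_vec n A (\<lambda>j. complex_of_real (1/r) * v j)) = \<bar>1/r\<bar> * vec_norm2 n (mat_vec n A v)"
      by (simp only: mat_vec_scale vec_norm2_scale)
    ultimately have "vec_norm2 n (mat_vec n A v) / r \<le> spec_norm n A"
      using r by simp
    then show ?thesis using r by (simp add: r_def[symmetric] pos_divide_le_eq mult.commute)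
  qed
qed

lemma dft_entry_norm: "n \<ge> 1 \<Longrightarrow> cmod (dft_mat n j k) = 1 / sqrt (real n)"
  unfolding dft_mat_def by (simp add: norm_divide norm_exp_eq_Re)

lemma dft_bound:
  assumes n: "n \<ge> 1"
  shows "cmod (mat_vec n (dft_mat n) w i) \<le> vec_norm2 n w"
proof -
  have "cmod (mat_vec n (dft_mat n) w i) \<le> sqrt (\<Sum>j<n. (cmod (dft_mat n i j))\<^sup>2) * sqrt (\<Sum>j<n. (cmod (w j))\<^sup>2)"
    unfolding mat_vec_def by (rule cs_sum)
  also have "(\<Sum>j<n. (cmod (dft_mat n i j))\<^sup>2) = 1"
    using n by (simp add: dft_entry_norm power_divide)
  finally show ?thesis by (simp add: vec_norm2_def)
qed

lemma prob_space_gauss_pair: "prob_space (gauss_pair n)"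
proof -
  have p: "prob_space (PiM {..<n} (\<lambda>_. std_gauss))" by (rule prob_space_PiM) (rule prob_space_std_gauss)
  interpret X: prob_space "PiM {..<n} (\<lambda>_. std_gauss)" by (rule p)
  interpret pair_prob_space "PiM {..<n} (\<lambda>_. std_gauss)" "PiM {..<n} (\<lambda>_. std_gauss)" by standard
  show ?thesis unfolding gauss_pair_def by (rule P.prob_space_axioms)
qed

theorem mainTheorem3:
  fixes n :: nat and Sigma S :: "nat \<Rightarrow> nat \<Rightarrow> complex" and \<alpha> :: real
  assumes "n \<ge> 1"
    and "psd_mat n Sigma"
    and "psd_mat n S" and "\<forall>i<n. \<forall>k<n. mat_mult n S S i k = Sigma i k"
    and "\<alpha> > 0"
  shows "measure (gauss_pair n)
           {(x, y) \<in> space (gauss_pair n).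
              vec_norm_inf n (mat_vec n (dft_mat n)
                 (mat_vec n S (\<lambda>j. Complex (x j) (y j))))
              \<le> \<alpha> * spec_norm n S}
         \<ge> lower_inc_Gamma (real n) (\<alpha>\<^sup>2 / 2) / Gamma (real n)"
proof -
  note n = assms(1) and al = assms(5)
  let ?M = "gauss_pair n"
  let ?c = "\<alpha> * spec_norm n S"
  define E where "E = {(x, y) \<in> space (gauss_pair n).
              vec_norm_inf n (mat_vec n (dft_mat n)
                 (mat_vec n S (\<lambda>j. Complex (x j) (y j))))
              \<le> \<alpha> * spec_norm n S}"
  define A where "A = {\<omega> \<in> space ?M. (\<Sum>i<n. (fst \<omega> i)\<^sup>2 + (snd \<omega> i)\<^sup>2) \<le> \<alpha>\<^sup>2}"
  have ne: "{..<n} \<noteq> {}" using n by (auto simp: lessThan_empty_iff)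
  have Eeq: "E = {\<omega> \<in> space ?M. \<forall>i<n. cmod (mat_vec n (dft_mat n)
                 (mat_vec n S (\<lambda>j. Complex (fst \<omega> j) (snd \<omega> j))) i) \<le> ?c}"
    unfolding E_def vec_norm_inf_def using ne by (auto simp: Max_le_iff)
  have Em: "E \<in> sets ?M"
    unfolding Eeq mat_vec_def Complex_eq gauss_pair_def by measurable
  have sub: "A \<subseteq> E"
  proof
    fix \<omega> assume w: "\<omega> \<in> A"
    let ?z = "\<lambda>j. Complex (fst \<omega> j) (snd \<omega> j)"
    have "vec_norm2 n ?z = sqrt (\<Sum>i<n. (fst \<omega> i)\<^sup>2 + (snd \<omega> i)\<^sup>2)"
      by (simp add: vec_norm2_def cmod_power2)
    also have "\<dots> \<le> sqrt (\<alpha>\<^sup>2)" using w unfolding A_def by (intro real_sqrt_le_mono) simp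
    also have "\<dots> = \<alpha>" using al by simp
    finally have zb: "vec_norm2 n ?z \<le> \<alpha>" .
    have "cmod (mat_vec n (dft_mat n) (mat_vec n S ?z) i) \<le> ?c" for i
    proof -
      have "cmod (mat_vec n (dft_mat n) (mat_vec n S ?z) i) \<le> vec_norm2 n (mat_vec n S ?z)"
        by (rule dft_bound[OF n])
      also have "\<dots> \<le> spec_norm n S * vec_norm2 n ?z" by (rule spec_bound)
      also have "\<dots> \<le> spec_norm n S * \<alpha>" by (intro mult_left_mono zb spec_nonneg)
      finally show ?thesis by (simp add: mult.commute)
    qed
    then show "\<omega> \<in> E" using w unfolding Eeq A_def by auto
  qed
  interpret GP: prob_space ?M by (rule prob_space_gauss_pair)
  have "measure ?M A = erlang_CDF (n - 1) (1/2) (\<alpha>\<^sup>2)"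
    unfolding A_def by (rule chi_bound[OF n]) simp
  also have "\<dots> = erlang_CDF (n - 1) 1 (\<alpha>\<^sup>2 / 2)"
    by (subst erlang_CDF_transform) auto
  also have "\<dots> = lower_inc_Gamma (real n) (\<alpha>\<^sup>2 / 2) / Gamma (real n)"
    by (rule gamma_erlang[OF n, symmetric]) simp
  finally have "lower_inc_Gamma (real n) (\<alpha>\<^sup>2 / 2) / Gamma (real n) = measure ?M A" ..
  also have "\<dots> \<le> measure ?M E" by (rule GP.finite_measure_mono[OF sub Em])
  finally show ?thesis unfolding E_def .
qed

end
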